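(* Let $\Phi=\forall u_1\ldots\forall u_n\exists e_1(D_1)\ldots\exists e_m(D_m).\varphi$ be a DQBF, let $A$ be a set of arbiter variables with arbiter clauses $\varphi_A$, let $\tau$ be a (partial) assignment to $A$, and let $\rho\in[U]$. Then $\varphi\wedge\varphi_A\wedge\tau\wedge\rho$ and $\varphi^\rho\wedge\tau^\rho$ are equisatisfiable.
   Context: For a set $V$ of variables, $[V]$ is the set of assignments $V\to\{\textsc{true},\textsc{false}\}$; an assignment is identified with the term (conjunction) of the literals it makes true, $\neg\sigma$ denotes the clause consisting of the negations of these literals, and $\sigma|_W$ denotes restriction. A DQBF is $\Phi=\forall u_1\ldots\forall u_n\exists e_1(D_1)\ldots\exists e_m(D_m).\varphi$ with pairwise distinct variables, $U=\{u_i\}$, $E=\{e_j\}$, dependency sets $D(e_j)=D_j\subseteq U$, and $\varphi$ a CNF over $U\cup E$. Arbiter variables: for $e\in E$ and $\sigma\in[D(e)]$, $e^\sigma$ is a fresh propositional variable (different annotations give different variables); for a literal $\ell$ on $e$, $\ell^\sigma$ is the literal on $e^\sigma$ of the same polarity. For a set $A$ of arbiter variables, the arbiter clauses are $\varphi_A=\bigwedge_{e^\sigma\in A}\big((e^\sigma\vee\neg\sigma\vee\neg e)\wedge(\neg e^\sigma\vee\neg\sigma\vee e)\big)$. For a partial assignment $\tau$ of $A$ (viewed as a set of arbiter literals) and $\rho\in[U]$, let $\tau^\rho=\{\ell^\sigma\in\tau\mid \rho\models\sigma\}$. For $\rho\in[U]$, the instantiation of $\varphi$ by $\rho$ is the CNF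 $\varphi^\rho=\{\{x^{\rho|_{D(\mathit{var}(x))}}\mid x\in C,\ \mathit{var}(x)\in E\}\mid C\in\varphi,\ \text{no universal literal of } C \text{ is satisfied by }\rho\}$, whose variables $e^{\rho|_{D(e)}}$ are identified with the arbiter variables of the same name. *)

theory Defs
  imports Main
begin

text \<open>Propositional variables: universal variables, existential variables, and
arbiter variables e^sigma where sigma is an assignment of D(e), represented as a
partial map with domain D(e).\<close>
datatype ('u, 'e) var = UVar 'u | EVar 'e | Arb 'e "'u \<rightharpoonup> bool"

type_synonym ('u, 'e) lit = "('u, 'e) var \<times> bool"
type_synonym ('u, 'e) clause = "('u, 'e) lit set"
type_synonym ('u, 'e) cnf = "('u, 'e) clause set"

definition lit_sat :: "(('u, 'e) var \<Rightarrow> bool) \<Rightarrow> ('u, 'e) lit \<Rightarrow> bool" where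
  "lit_sat \<alpha> l \<longleftrightarrow> \<alpha> (fst l) = snd l"

definition cnf_sat :: "(('u, 'e) var \<Rightarrow> bool) \<Rightarrow> ('u, 'e) cnf \<Rightarrow> bool" where
  "cnf_sat \<alpha> F \<longleftrightarrow> (\<forall>C\<in>F. \<exists>l\<in>C. lit_sat \<alpha> l)"

definition satisfiable :: "('u, 'e) cnf \<Rightarrow> bool" where
  "satisfiable F \<longleftrightarrow> (\<exists>\<alpha>. cnf_sat \<alpha> F)"

definition equisat :: "('u, 'e) cnf \<Rightarrow> ('u, 'e) cnf \<Rightarrow> bool" where
  "equisat F G \<longleftrightarrow> (satisfiable F \<longleftrightarrow> satisfiable G)"

definition assignments :: "'u set \<Rightarrow> ('u \<rightharpoonup> bool) set" where
  "assignments W = {\<sigma>. dom \<sigma> = W}"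

definition restr :: "('u \<Rightarrow> bool) \<Rightarrow> 'u set \<Rightarrow> ('u \<rightharpoonup> bool)" where
  "restr \<rho> W = (\<lambda>u. if u \<in> W then Some (\<rho> u) else None)"

definition models_term :: "('u \<Rightarrow> bool) \<Rightarrow> ('u \<rightharpoonup> bool) \<Rightarrow> bool" where
  "models_term \<rho> \<sigma> \<longleftrightarrow> (\<forall>u b. \<sigma> u = Some b \<longrightarrow> \<rho> u = b)"

definition neg_term :: "('u \<rightharpoonup> bool) \<Rightarrow> ('u, 'e) clause" where
  "neg_term \<sigma> = {(UVar u, \<not> b) | u b. \<sigma> u = Some b}"

definition is_arbiter_var :: "('e \<Rightarrow> 'u set) \<Rightarrow> 'e set \<Rightarrow> ('u, 'e) var \<Rightarrow> bool" where
  "is_arbiter_var D E x \<longleftrightarrow> (\<exists>e \<sigma>. x = Arb e \<sigma> \<and> e \<in> E \<and> \<sigma> \<in> assignments (D e))"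

definition dqbf :: "'u set \<Rightarrow> 'e set \<Rightarrow> ('e \<Rightarrow> 'u set) \<Rightarrow> ('u, 'e) cnf \<Rightarrow> bool" where
  "dqbf U E D \<phi> \<longleftrightarrow> finite U \<and> finite E \<and> finite \<phi> \<and> (\<forall>C\<in>\<phi>. finite C) \<and>
     (\<forall>e\<in>E. D e \<subseteq> U) \<and>
     (\<forall>C\<in>\<phi>. \<forall>(x, b)\<in>C. (\<exists>u\<in>U. x = UVar u) \<or> (\<exists>e\<in>E. x = EVar e))"

definition arbiter_clauses :: "('u, 'e) var set \<Rightarrow> ('u, 'e) cnf" where
  "arbiter_clauses A =
     (\<Union>e. \<Union>\<sigma>. if Arb e \<sigma> \<in> A then
        {insert (Arb e \<sigma>, True) (insert (EVar e, False) (neg_term \<sigma>)),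
         insert (Arb e \<sigma>, False) (insert (EVar e, True) (neg_term \<sigma>))}
      else {})"

definition partial_assignment :: "('u, 'e) var set \<Rightarrow> ('u, 'e) lit set \<Rightarrow> bool" where
  "partial_assignment A \<tau> \<longleftrightarrow> (\<forall>(x, b)\<in>\<tau>. x \<in> A) \<and>
     (\<forall>x b. (x, b) \<in> \<tau> \<longrightarrow> (x, \<not> b) \<notin> \<tau>)"

definition units :: "('u, 'e) lit set \<Rightarrow> ('u, 'e) cnf" where
  "units L = {{l} | l. l \<in> L}"

definition univ_term :: "'u set \<Rightarrow> ('u \<Rightarrow> bool) \<Rightarrow> ('u, 'e) lit set" where
  "univ_term U \<rho> = {(UVar u, \<rho> u) | u. u \<in> U}"

definition tau_restr :: "('u, 'e) lit set \<Rightarrow> ('u \<Rightarrow> bool) \<Rightarrow> ('u, 'e) lit set" where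
  "tau_restr \<tau> \<rho> = {(Arb e \<sigma>, b) | e \<sigma> b. (Arb e \<sigma>, b) \<in> \<tau> \<and> models_term \<rho> \<sigma>}"

definition instantiate :: "('e \<Rightarrow> 'u set) \<Rightarrow> ('u, 'e) cnf \<Rightarrow> ('u \<Rightarrow> bool) \<Rightarrow> ('u, 'e) cnf" where
  "instantiate D \<phi> \<rho> =
     {{(Arb e (restr \<rho> (D e)), b) | e b. (EVar e, b) \<in> C} | C.
        C \<in> \<phi> \<and> \<not> (\<exists>u b. (UVar u, b) \<in> C \<and> \<rho> u = b)}"

end

theory Submission
  imports Defs
begin

theorem lemma4:
  fixes U :: "'u set" and E :: "'e set" and D :: "'e \<Rightarrow> 'u set"
    and \<phi> :: "('u, 'e) cnf" and A :: "('u, 'e) var set"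
    and \<tau> :: "('u, 'e) lit set" and \<rho> :: "'u \<Rightarrow> bool"
  assumes "dqbf U E D \<phi>"
    and "\<forall>x\<in>A. is_arbiter_var D E x"
    and "partial_assignment A \<tau>"
  shows "equisat (\<phi> \<union> arbiter_clauses A \<union> units \<tau> \<union> units (univ_term U \<rho>))
                 (instantiate D \<phi> \<rho> \<union> units (tau_restr \<tau> \<rho>))"
proof -
  have DU: "\<And>e. e \<in> E \<Longrightarrow> D e \<subseteq> U" and CU: "\<And>C x b. C \<in> \<phi> \<Longrightarrow> (x, b) \<in> C \<Longrightarrow>
      (\<exists>u\<in>U. x = UVar u) \<or> (\<exists>e\<in>E. x = EVar e)"
    using assms(1) unfolding dqbf_def by blast+
  have tauA: "\<And>x b. (x, b) \<in> \<tau> \<Longrightarrow> x \<in> A" and tauC: "\<And>x b. (x, b) \<in> \<tau> \<Longrightarrow> (x, \<not> b) \<notin> \<tau>"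
    using assms(3) unfolding partial_assignment_def by blast+
  have arbA: "\<And>e \<sigma>. Arb e \<sigma> \<in> A \<Longrightarrow> e \<in> E \<and> dom \<sigma> = D e"
    using assms(2) unfolding is_arbiter_var_def assignments_def by fastforce
  have mt: "\<And>\<sigma> e. dom \<sigma> = D e \<Longrightarrow> models_term \<rho> \<sigma> \<Longrightarrow> \<sigma> = restr \<rho> (D e)"
  proof -
    fix \<sigma> :: "'u \<rightharpoonup> bool" and e
    assume d: "dom \<sigma> = D e" and m: "models_term \<rho> \<sigma>"
    show "\<sigma> = restr \<rho> (D e)"
    proof
      fix u show "\<sigma> u = restr \<rho> (D e) u"
        using d m unfolding restr_def models_term_def by (cases "\<sigma> u") auto
    qed
  qed
  show ?thesis unfolding equisat_def satisfiable_def
  proof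
    assume "\<exists>\<alpha>. cnf_sat \<alpha> (\<phi> \<union> arbiter_clauses A \<union> units \<tau> \<union> units (univ_term U \<rho>))"
    then obtain \<alpha> where s: "cnf_sat \<alpha> (\<phi> \<union> arbiter_clauses A \<union> units \<tau> \<union> units (univ_term U \<rho>))" by blast
    have sphi: "\<And>C. C \<in> \<phi> \<Longrightarrow> \<exists>l\<in>C. lit_sat \<alpha> l" using s unfolding cnf_sat_def by blast
    have stau: "\<And>l. l \<in> \<tau> \<Longrightarrow> lit_sat \<alpha> l" using s unfolding cnf_sat_def units_def by blast
    have sU: "\<And>u. u \<in> U \<Longrightarrow> \<alpha> (UVar u) = \<rho> u"
    proof -
      fix u assume "u \<in> U"
      then have "{(UVar u, \<rho> u)} \<in> units (univ_term U \<rho>)" unfolding units_def univ_term_def by blast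
      then have "\<exists>l\<in>{(UVar u, \<rho> u)}. lit_sat \<alpha> l" using s unfolding cnf_sat_def by blast
      then show "\<alpha> (UVar u) = \<rho> u" unfolding lit_sat_def by simp
    qed
    have sarb: "\<And>e \<sigma>. Arb e \<sigma> \<in> A \<Longrightarrow> models_term \<rho> \<sigma> \<Longrightarrow> \<alpha> (Arb e \<sigma>) = \<alpha> (EVar e)"
    proof -
      fix e \<sigma> assume a: "Arb e \<sigma> \<in> A" and m: "models_term \<rho> \<sigma>"
      have c1: "insert (Arb e \<sigma>, True) (insert (EVar e, False) (neg_term \<sigma>)) \<in> arbiter_clauses A"
       and c2: "insert (Arb e \<sigma>, False) (insert (EVar e, True) (neg_term \<sigma>)) \<in> arbiter_clauses A"
        using a unfolding arbiter_clauses_def by force+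
      have nt: "\<And>l. l \<in> neg_term \<sigma> \<Longrightarrow> \<not> lit_sat \<alpha> l"
      proof -
        fix l :: "('u, 'e) lit" assume "l \<in> neg_term \<sigma>"
        then obtain u b where l: "l = (UVar u, \<not> b)" "\<sigma> u = Some b" unfolding neg_term_def by blast
        then have "u \<in> U" using arbA[OF a] DU by blast
        then show "\<not> lit_sat \<alpha> l" using sU l m unfolding lit_sat_def models_term_def by auto
      qed
      have "\<exists>l\<in>insert (Arb e \<sigma>, True) (insert (EVar e, False) (neg_term \<sigma>)). lit_sat \<alpha> l"
        using c1 s unfolding cnf_sat_def by blast
      then have h1: "\<alpha> (Arb e \<sigma>) \<or> \<not> \<alpha> (EVar e)" using nt unfolding lit_sat_def by auto
      have "\<exists>l\<in>insert (Arb e \<sigma>, False) (insert (EVar e, True) (neg_term \<sigma>)). lit_sat \<alpha> l"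
        using c2 s unfolding cnf_sat_def by blast
      then have h2: "\<not> \<alpha> (Arb e \<sigma>) \<or> \<alpha> (EVar e)" using nt unfolding lit_sat_def by auto
      from h1 h2 show "\<alpha> (Arb e \<sigma>) = \<alpha> (EVar e)" by blast
    qed
    define \<beta> where "\<beta> = (\<lambda>x. case x of Arb e \<sigma> \<Rightarrow> if \<sigma> = restr \<rho> (D e) then \<alpha> (EVar e) else \<alpha> x | _ \<Rightarrow> \<alpha> x)"
    have "cnf_sat \<beta> (instantiate D \<phi> \<rho> \<union> units (tau_restr \<tau> \<rho>))"
      unfolding cnf_sat_def
    proof
      fix C' assume "C' \<in> instantiate D \<phi> \<rho> \<union> units (tau_restr \<tau> \<rho>)"
      then consider (i) "C' \<in> instantiate D \<phi> \<rho>" | (t) "C' \<in> units (tau_restr \<tau> \<rho>)" by blast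
      then show "\<exists>l\<in>C'. lit_sat \<beta> l"
      proof cases
        case i
        then obtain C where C: "C \<in> \<phi>" "\<not> (\<exists>u b. (UVar u, b) \<in> C \<and> \<rho> u = b)"
          and C': "C' = {(Arb e (restr \<rho> (D e)), b) | e b. (EVar e, b) \<in> C}"
          unfolding instantiate_def by blast
        obtain x b where xb: "(x, b) \<in> C" "\<alpha> x = b" using sphi[OF C(1)] unfolding lit_sat_def by auto
        from CU[OF C(1) xb(1)] show ?thesis
        proof
          assume "\<exists>u\<in>U. x = UVar u"
          then obtain u where "u \<in> U" "x = UVar u" by blast
          then show ?thesis using sU xb C(2) by auto
        next
          assume "\<exists>e\<in>E. x = EVar e"
          then obtain e where "x = EVar e" by blast
          then have "(Arb e (restr \<rho> (D e)), b) \<in> C'" using C' xb by blast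
          moreover have "lit_sat \<beta> (Arb e (restr \<rho> (D e)), b)"
            using xb \<open>x = EVar e\<close> unfolding lit_sat_def \<beta>_def by simp
          ultimately show ?thesis by blast
        qed
      next
        case t
        then obtain e \<sigma> b where l: "C' = {(Arb e \<sigma>, b)}" "(Arb e \<sigma>, b) \<in> \<tau>" "models_term \<rho> \<sigma>"
          unfolding units_def tau_restr_def by blast
        have a: "Arb e \<sigma> \<in> A" using tauA l(2) by blast
        have "\<sigma> = restr \<rho> (D e)" using mt arbA[OF a] l(3) by blast
        then show ?thesis using l stau[OF l(2)] sarb[OF a l(3)] unfolding lit_sat_def \<beta>_def by simp
      qed
    qed
    then show "\<exists>\<beta>. cnf_sat \<beta> (instantiate D \<phi> \<rho> \<union> units (tau_restr \<tau> \<rho>))" by blast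
  next
    assume "\<exists>\<beta>. cnf_sat \<beta> (instantiate D \<phi> \<rho> \<union> units (tau_restr \<tau> \<rho>))"
    then obtain \<beta> where s: "cnf_sat \<beta> (instantiate D \<phi> \<rho> \<union> units (tau_restr \<tau> \<rho>))" by blast
    define \<alpha> where "\<alpha> = (\<lambda>x. case x of UVar u \<Rightarrow> \<rho> u
        | EVar e \<Rightarrow> \<beta> (Arb e (restr \<rho> (D e)))
        | Arb e \<sigma> \<Rightarrow> if models_term \<rho> \<sigma> then \<beta> (Arb e \<sigma>) else (Arb e \<sigma>, True) \<in> \<tau>)"
    have "cnf_sat \<alpha> (\<phi> \<union> arbiter_clauses A \<union> units \<tau> \<union> units (univ_term U \<rho>))"
      unfolding cnf_sat_def
    proof
      fix C assume "C \<in> \<phi> \<union> arbiter_clauses A \<union> units \<tau> \<union> units (univ_term U \<rho>)"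
      then consider (p) "C \<in> \<phi>" | (a) "C \<in> arbiter_clauses A" | (t) "C \<in> units \<tau>"
        | (u) "C \<in> units (univ_term U \<rho>)" by blast
      then show "\<exists>l\<in>C. lit_sat \<alpha> l"
      proof cases
        case p
        show ?thesis
        proof (cases "\<exists>u b. (UVar u, b) \<in> C \<and> \<rho> u = b")
          case True
          then show ?thesis unfolding lit_sat_def \<alpha>_def by force
        next
          case False
          let ?C' = "{(Arb e (restr \<rho> (D e)), b) | e b. (EVar e, b) \<in> C}"
          have "?C' \<in> instantiate D \<phi> \<rho>" using p False unfolding instantiate_def by blast
          then obtain l where "l \<in> ?C'" "lit_sat \<beta> l" using s unfolding cnf_sat_def by blast
          then obtain e b where "(EVar e, b) \<in> C" "\<beta> (Arb e (restr \<rho> (D e))) = b"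
            unfolding lit_sat_def by auto
          then show ?thesis unfolding lit_sat_def \<alpha>_def by force
        qed
      next
        case a
        then obtain e \<sigma> where a': "Arb e \<sigma> \<in> A" and C:
          "C = insert (Arb e \<sigma>, True) (insert (EVar e, False) (neg_term \<sigma>)) \<or>
           C = insert (Arb e \<sigma>, False) (insert (EVar e, True) (neg_term \<sigma>))"
          unfolding arbiter_clauses_def by (auto split: if_splits)
        show ?thesis
        proof (cases "models_term \<rho> \<sigma>")
          case True
          then have "\<sigma> = restr \<rho> (D e)" using mt arbA[OF a'] by blast
          then have "\<alpha> (Arb e \<sigma>) = \<alpha> (EVar e)" using True unfolding \<alpha>_def by simp
          then show ?thesis using C unfolding lit_sat_def by auto
        next
          case False
          then obtain u b where "\<sigma> u = Some b" "\<rho> u \<noteq> b" unfolding models_term_def by blast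
          then have "(UVar u, \<not> b) \<in> neg_term \<sigma>" "lit_sat \<alpha> (UVar u, \<not> b)"
            unfolding neg_term_def lit_sat_def \<alpha>_def by auto
          then show ?thesis using C by blast
        qed
      next
        case t
        then obtain x b where l: "C = {(x, b)}" "(x, b) \<in> \<tau>" unfolding units_def by force
        obtain e \<sigma> where x: "x = Arb e \<sigma>" using tauA[OF l(2)] assms(2) unfolding is_arbiter_var_def by blast
        show ?thesis
        proof (cases "models_term \<rho> \<sigma>")
          case True
          then have "{(Arb e \<sigma>, b)} \<in> units (tau_restr \<tau> \<rho>)" using l x
            unfolding units_def tau_restr_def by blast
          then have "\<exists>l\<in>{(Arb e \<sigma>, b)}. lit_sat \<beta> l" using s unfolding cnf_sat_def by blast
          then have "\<beta> (Arb e \<sigma>) = b" unfolding lit_sat_def by simp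
          then show ?thesis using True l x unfolding lit_sat_def \<alpha>_def by simp
        next
          case False
          have "b = ((Arb e \<sigma>, True) \<in> \<tau>)" 
          proof (cases b)
            case True then show ?thesis using l x by simp
          next
            case False
            then have "(Arb e \<sigma>, False) \<in> \<tau>" using l x by simp
            then have "(Arb e \<sigma>, \<not> False) \<notin> \<tau>" by (rule tauC)
            then show ?thesis using False by simp
          qed
          then show ?thesis using False l x unfolding lit_sat_def \<alpha>_def by simp
        qed
      next
        case u
        then show ?thesis unfolding units_def univ_term_def lit_sat_def \<alpha>_def by auto
      qed
    qed
    then show "\<exists>\<alpha>. cnf_sat \<alpha> (\<phi> \<union> arbiter_clauses A \<union> units \<tau> \<union> units (univ_term U \<rho>))" by blast
  qed
qed

end
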